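(* Let $V$ be a finite-dimensional vector space over $\Bbbk$ and let $\mathcal E\subset\operatorname{End}(V)$ be a linear subspace which is a semigroup (closed under composition and containing $\mathrm{id}_V$). Then $\mathcal E(v)=M(v)=\mathcal D_{\mathcal E}(v)$ for all $v\in V$. In particular, a closed subvariety $Y\subset V$ is $\mathcal D_{\mathcal E}$-invariant if and only if it is $\mathcal E$-stable. Moreover, $\mathcal E(w)=\mathcal E(v)$ for all $w$ in an open neighborhood of $v$ in $\mathcal E(v)$.
   Context: $\Bbbk$ is algebraically closed of characteristic $0$. $\operatorname{End}(V)$ is the set of all polynomial maps $V\to V$. Vector fields on $V$ are identified with polynomial maps $\xi\colon V\to V$, $\xi(v)\in V=T_vV$. $\mathcal D_{\mathcal E}$ is the set of vector fields $v\mapsto\phi(v)$ for $\phi\in\mathcal E$, and $\mathcal D_{\mathcal E}(v)=\{\xi(v)\mid\xi\in\mathcal D_{\mathcal E}\}\subset V$. A closed subvariety $Y\subset V$ is $\mathcal D_{\mathcal E}$-invariant if $\xi(y)\in T_yY$ for all $y\in Y$ and $\xi\in\mathcal D_{\mathcal E}$; $M(v)$ is the smallest closed $\mathcal D_{\mathcal E}$-invariant subvariety containing $v$. $\mathcal E(v)=\{\phi(v)\mid\phi\in\mathcal E\}$; $Y$ is $\mathcal E$-stable if $\phi(Y)\subset Y$ for all $\phi\in\mathcal E$. *)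

theory Defs
  imports "HOL-Computational_Algebra.Polynomial"
begin

text \<open>V is modelled as k^n, i.e. functions 'n \<Rightarrow> 'k for a finite index type 'n.\<close>

definition alg_closed :: "'k::field itself \<Rightarrow> bool" where
  "alg_closed _ \<longleftrightarrow> (\<forall>p::'k poly. degree p > 0 \<longrightarrow> (\<exists>x. poly p x = 0))"

inductive_set poly_fun :: "(('n \<Rightarrow> 'k::comm_ring_1) \<Rightarrow> 'k) set" where
  const: "(\<lambda>v. c) \<in> poly_fun"
| coord: "(\<lambda>v. v i) \<in> poly_fun"
| add: "f \<in> poly_fun \<Longrightarrow> g \<in> poly_fun \<Longrightarrow> (\<lambda>v. f v + g v) \<in> poly_fun"
| mult: "f \<in> poly_fun \<Longrightarrow> g \<in> poly_fun \<Longrightarrow> (\<lambda>v. f v * g v) \<in> poly_fun"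

text \<open>Polynomial maps V \<rightarrow> V (the set End(V)).\<close>
definition poly_maps :: "(('n \<Rightarrow> 'k::comm_ring_1) \<Rightarrow> ('n \<Rightarrow> 'k)) set" where
  "poly_maps = {\<phi>. \<forall>i. (\<lambda>v. \<phi> v i) \<in> poly_fun}"

definition zariski_closed :: "('n \<Rightarrow> 'k::comm_ring_1) set \<Rightarrow> bool" where
  "zariski_closed Y \<longleftrightarrow> (\<exists>F \<subseteq> poly_fun. Y = {v. \<forall>f\<in>F. f v = 0})"

definition zariski_open_in :: "('n \<Rightarrow> 'k::comm_ring_1) set \<Rightarrow> ('n \<Rightarrow> 'k) set \<Rightarrow> bool" where
  "zariski_open_in Y U \<longleftrightarrow> U \<subseteq> Y \<and> (\<exists>Z. zariski_closed Z \<and> U = Y - Z)"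

definition dir_deriv :: "(('n \<Rightarrow> 'k::field_char_0) \<Rightarrow> 'k) \<Rightarrow> ('n \<Rightarrow> 'k) \<Rightarrow> ('n \<Rightarrow> 'k) \<Rightarrow> 'k" where
  "dir_deriv f y w = coeff (THE p. \<forall>t. poly p t = f (\<lambda>i. y i + t * w i)) 1"

definition tangent_space :: "('n \<Rightarrow> 'k::field_char_0) set \<Rightarrow> ('n \<Rightarrow> 'k) \<Rightarrow> ('n \<Rightarrow> 'k) set" where
  "tangent_space Y y = {w. \<forall>f\<in>poly_fun. (\<forall>x\<in>Y. f x = 0) \<longrightarrow> dir_deriv f y w = 0}"

definition semigroup_subspace :: "(('n \<Rightarrow> 'k::comm_ring_1) \<Rightarrow> ('n \<Rightarrow> 'k)) set \<Rightarrow> bool" where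
  "semigroup_subspace E \<longleftrightarrow> E \<subseteq> poly_maps \<and> (\<lambda>v. (\<lambda>i. 0)) \<in> E
     \<and> (\<forall>\<phi>\<in>E. \<forall>\<psi>\<in>E. (\<lambda>v. (\<lambda>i. \<phi> v i + \<psi> v i)) \<in> E)
     \<and> (\<forall>\<phi>\<in>E. \<forall>c. (\<lambda>v. (\<lambda>i. c * \<phi> v i)) \<in> E)
     \<and> (\<forall>\<phi>\<in>E. \<forall>\<psi>\<in>E. \<phi> \<circ> \<psi> \<in> E) \<and> id \<in> E"

definition vfields :: "(('n \<Rightarrow> 'k) \<Rightarrow> ('n \<Rightarrow> 'k)) set \<Rightarrow> (('n \<Rightarrow> 'k) \<Rightarrow> ('n \<Rightarrow> 'k)) set" where
  "vfields E = {\<xi>. \<exists>\<phi>\<in>E. \<xi> = (\<lambda>v. \<phi> v)}"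

definition vfields_at :: "(('n \<Rightarrow> 'k) \<Rightarrow> ('n \<Rightarrow> 'k)) set \<Rightarrow> ('n \<Rightarrow> 'k) \<Rightarrow> ('n \<Rightarrow> 'k) set" where
  "vfields_at E v = {\<xi> v | \<xi>. \<xi> \<in> vfields E}"

definition orbit_E :: "(('n \<Rightarrow> 'k) \<Rightarrow> ('n \<Rightarrow> 'k)) set \<Rightarrow> ('n \<Rightarrow> 'k) \<Rightarrow> ('n \<Rightarrow> 'k) set" where
  "orbit_E E v = {\<phi> v | \<phi>. \<phi> \<in> E}"

definition D_invariant :: "(('n \<Rightarrow> 'k::field_char_0) \<Rightarrow> ('n \<Rightarrow> 'k)) set \<Rightarrow> ('n \<Rightarrow> 'k) set \<Rightarrow> bool" where
  "D_invariant E Y \<longleftrightarrow> zariski_closed Y \<and> (\<forall>y\<in>Y. \<forall>\<xi>\<in>vfields E. \<xi> y \<in> tangent_space Y y)"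

definition E_stable :: "(('n \<Rightarrow> 'k) \<Rightarrow> ('n \<Rightarrow> 'k)) set \<Rightarrow> ('n \<Rightarrow> 'k) set \<Rightarrow> bool" where
  "E_stable E Y \<longleftrightarrow> (\<forall>\<phi>\<in>E. \<phi> ` Y \<subseteq> Y)"

definition is_M :: "(('n \<Rightarrow> 'k::field_char_0) \<Rightarrow> ('n \<Rightarrow> 'k)) set \<Rightarrow> ('n \<Rightarrow> 'k) \<Rightarrow> ('n \<Rightarrow> 'k) set \<Rightarrow> bool" where
  "is_M E v Y \<longleftrightarrow> D_invariant E Y \<and> v \<in> Y \<and> (\<forall>Z. D_invariant E Z \<and> v \<in> Z \<longrightarrow> Y \<subseteq> Z)"

end

theory Submission
  imports Defs "HOL-Library.Function_Algebras" "Jordan_Normal_Form.Determinant"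
begin

lemma dd_eqI:
  fixes g :: "('v \<Rightarrow> 'k::field_char_0) \<Rightarrow> 'k"
  assumes "\<forall>t. poly p t = g (\<lambda>i. y i + t * w i)"
  shows "dir_deriv g y w = coeff p 1"
proof -
  have "(THE p. \<forall>t. poly p t = g (\<lambda>i. y i + t * w i)) = p"
  proof (rule the_equality)
    fix q assume "\<forall>t. poly q t = g (\<lambda>i. y i + t * w i)"
    with assms have "poly q = poly p" by auto
    thus "q = p" using poly_eq_poly_eq_iff by blast
  qed (use assms in auto)
  thus ?thesis by (simp add: dir_deriv_def)
qed

lemma dd_cong_line:
  assumes "\<forall>t. g (\<lambda>i. y i + t * w i) = h (\<lambda>i. y' i + t * w' i)"
  shows "dir_deriv g y w = dir_deriv h y' w'"
  unfolding dir_deriv_def using assms by simp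

lemma pf_expand:
  assumes "f \<in> poly_fun"
  shows "\<exists>p. \<forall>t. poly p t = f (\<lambda>i. y i + t * w i)"
  using assms
proof induction
  case (const c) show ?case by (rule exI[of _ "[:c:]"]) simp
next
  case (coord i) show ?case by (rule exI[of _ "[:y i, w i:]"]) (simp add: mult.commute)
next
  case (add f g)
  then obtain p q where "\<forall>t. poly p t = f (\<lambda>i. y i + t * w i)" "\<forall>t. poly q t = g (\<lambda>i. y i + t * w i)" by blast
  thus ?case by (intro exI[of _ "p + q"]) simp
next
  case (mult f g)
  then obtain p q where "\<forall>t. poly p t = f (\<lambda>i. y i + t * w i)" "\<forall>t. poly q t = g (\<lambda>i. y i + t * w i)" by blast
  thus ?case by (intro exI[of _ "p * q"]) simp
qed

lemma coeff_mult_1: "coeff (p * q) (Suc 0) = coeff p 0 * coeff q (Suc 0) + coeff p (Suc 0) * coeff q 0"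
  by (simp add: coeff_mult atMost_Suc ac_simps)

lemma dd_const[simp]: "dir_deriv (\<lambda>v. c) y w = (0::'k::field_char_0)"
  by (subst dd_eqI[of "[:c:]"]) auto

lemma dd_coord[simp]: "dir_deriv (\<lambda>v. v i) y w = (w i::'k::field_char_0)"
  by (subst dd_eqI[of "[:y i, w i:]"]) (auto simp: mult.commute)

lemma dd_add:
  fixes f g :: "('v \<Rightarrow> 'k::field_char_0) \<Rightarrow> 'k"
  assumes "f \<in> poly_fun" "g \<in> poly_fun"
  shows "dir_deriv (\<lambda>v. f v + g v) y w = dir_deriv f y w + dir_deriv g y w"
proof -
  obtain p q where p: "\<forall>t. poly p t = f (\<lambda>i. y i + t * w i)" and q: "\<forall>t. poly q t = g (\<lambda>i. y i + t * w i)"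
    using pf_expand assms by metis
  have pm: "\<forall>t. poly (p+q) t = f (\<lambda>i. y i + t * w i) + g (\<lambda>i. y i + t * w i)" using p q by simp
  show ?thesis using dd_eqI[OF pm] dd_eqI[OF p] dd_eqI[OF q] by simp
qed

lemma dd_mult:
  fixes f g :: "('v \<Rightarrow> 'k::field_char_0) \<Rightarrow> 'k"
  assumes "f \<in> poly_fun" "g \<in> poly_fun"
  shows "dir_deriv (\<lambda>v. f v * g v) y w = f y * dir_deriv g y w + dir_deriv f y w * g y"
proof -
  obtain p q where p: "\<forall>t. poly p t = f (\<lambda>i. y i + t * w i)" and q: "\<forall>t. poly q t = g (\<lambda>i. y i + t * w i)"
    using pf_expand assms by metis
  have pm: "\<forall>t. poly (p*q) t = f (\<lambda>i. y i + t * w i) * g (\<lambda>i. y i + t * w i)" using p q by simp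
  have "f y = coeff p 0" "g y = coeff q 0" using p q by (auto simp: poly_0_coeff_0[symmetric])
  thus ?thesis using dd_eqI[OF pm] dd_eqI[OF p] dd_eqI[OF q] by (simp add: coeff_mult_1)
qed


declare poly_fun.intros[intro]

lemma pf_comp:
  assumes "f \<in> poly_fun" "\<forall>i. (\<lambda>z. A z i) \<in> poly_fun"
  shows "(\<lambda>z. f (A z)) \<in> poly_fun"
  using assms(1) by induction (use assms(2) in auto)

lemma pf_dd:
  fixes f :: "('v \<Rightarrow> 'k::field_char_0) \<Rightarrow> 'k"
  assumes "f \<in> poly_fun" "\<forall>i. (\<lambda>z. A z i) \<in> poly_fun" "\<forall>i. (\<lambda>z. B z i) \<in> poly_fun"
  shows "(\<lambda>z. dir_deriv f (A z) (B z)) \<in> poly_fun"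
  using assms(1)
proof induction
  case (add f g) thus ?case by (simp add: dd_add poly_fun.add)
next
  case (mult f g)
  have "(\<lambda>z. f (A z)) \<in> poly_fun" "(\<lambda>z. g (A z)) \<in> poly_fun" using pf_comp mult assms by auto
  thus ?case using mult by (simp add: dd_mult poly_fun.add poly_fun.mult)
qed (use assms in auto)

lemma pf_ddc:
  fixes f :: "('v \<Rightarrow> 'k::field_char_0) \<Rightarrow> 'k"
  assumes "f \<in> poly_fun"
  shows "(\<lambda>z. dir_deriv f z a) \<in> poly_fun"
  using pf_dd[OF assms, of "\<lambda>z. z" "\<lambda>z. a"] by auto

lemma pf_ddv:
  fixes f :: "('v \<Rightarrow> 'k::field_char_0) \<Rightarrow> 'k"
  assumes "f \<in> poly_fun" "\<forall>i. (\<lambda>z. B z i) \<in> poly_fun"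
  shows "(\<lambda>z. dir_deriv f z (B z)) \<in> poly_fun"
  using pf_dd[OF assms(1), of "\<lambda>z. z" B] assms(2) by auto

lemma dd_lin:
  fixes f :: "('v \<Rightarrow> 'k::field_char_0) \<Rightarrow> 'k"
  assumes "f \<in> poly_fun"
  shows "dir_deriv f y (\<lambda>i. a * u i + w i) = a * dir_deriv f y u + dir_deriv f y w"
  using assms by induction (auto simp: dd_add dd_mult algebra_simps)

lemma pf_sum:
  assumes "\<forall>s\<in>S. F s \<in> poly_fun"
  shows "(\<lambda>v. \<Sum>s\<in>S. F s v) \<in> poly_fun"
proof (cases "finite S")
  case True thus ?thesis using assms by (induction S rule: finite_induct) auto
qed auto

lemma pf_prod:
  assumes "\<forall>s\<in>S. F s \<in> poly_fun"
  shows "(\<lambda>v. \<Prod>s\<in>S. F s v) \<in> poly_fun"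
proof (cases "finite S")
  case True thus ?thesis using assms by (induction S rule: finite_induct) auto
qed auto

lemma dd_sum:
  fixes F :: "'s \<Rightarrow> ('v \<Rightarrow> 'k::field_char_0) \<Rightarrow> 'k"
  assumes "finite S" "\<forall>s\<in>S. F s \<in> poly_fun"
  shows "dir_deriv (\<lambda>v. \<Sum>s\<in>S. F s v) y w = (\<Sum>s\<in>S. dir_deriv (F s) y w)"
  using assms
proof (induction S rule: finite_induct)
  case (insert s S)
  have "(\<lambda>v. \<Sum>s\<in>S. F s v) \<in> poly_fun" using insert pf_sum by auto
  thus ?case using insert by (simp add: dd_add)
qed simp

lemma dd_schwarz:
  fixes f :: "('v \<Rightarrow> 'k::field_char_0) \<Rightarrow> 'k"
  assumes "f \<in> poly_fun"
  shows "dir_deriv (\<lambda>y. dir_deriv f y a) x b = dir_deriv (\<lambda>y. dir_deriv f y b) x a"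
  using assms
proof induction
  case (add f g) thus ?case by (simp add: dd_add pf_ddc)
next
  case (mult f g)
  note pf = mult(1,2) pf_ddc[OF mult(1)] pf_ddc[OF mult(2)]
  show ?case using mult by (simp add: dd_add dd_mult pf_ddc poly_fun.mult algebra_simps)
qed auto

lemma dd_var:
  fixes f :: "('v \<Rightarrow> 'k::field_char_0) \<Rightarrow> 'k"
  assumes "f \<in> poly_fun" "\<forall>i. (\<lambda>y. A y i) \<in> poly_fun"
  shows "dir_deriv (\<lambda>y. dir_deriv f y (A y)) x b
     = dir_deriv (\<lambda>y. dir_deriv f y (A x)) x b + dir_deriv f x (\<lambda>i. dir_deriv (\<lambda>y. A y i) x b)"
  using assms(1)
proof induction
  case (add f g) thus ?case using assms(2) by (simp add: dd_add pf_ddc pf_ddv)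
next
  case (mult f g)
  show ?case using mult assms(2) by (simp add: dd_add dd_mult pf_ddc pf_ddv poly_fun.mult algebra_simps)
qed (use assms in auto)

fun KK :: "(('v \<Rightarrow> 'k::field_char_0) \<Rightarrow> 'k) \<Rightarrow> (('v \<Rightarrow> 'k) \<Rightarrow> ('v \<Rightarrow> 'k)) list \<Rightarrow> ('v + 'v \<Rightarrow> 'k) \<Rightarrow> 'k" where
  "KK f [] = (\<lambda>z. f (\<lambda>j. z (Inl j)))"
| "KK f (\<phi> # \<phi>s) = (\<lambda>z. dir_deriv (KK f \<phi>s) z (case_sum (\<phi> (\<lambda>j. z (Inr j))) (\<lambda>j. 0)))"

definition rho :: "('v \<Rightarrow> 'k::field_char_0) \<Rightarrow> (('v \<Rightarrow> 'k) \<Rightarrow> ('v \<Rightarrow> 'k)) \<Rightarrow> ('v \<Rightarrow> 'k) \<Rightarrow> ('v \<Rightarrow> 'k)" where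
  "rho u \<phi> = (\<lambda>x k. dir_deriv (\<lambda>x'. \<phi> x' k) x u)"

lemma pm_rho: "\<phi> \<in> poly_maps \<Longrightarrow> rho u \<phi> \<in> poly_maps"
  unfolding poly_maps_def rho_def using pf_ddc by auto

lemma KK_poly:
  assumes "f \<in> poly_fun" "set \<phi>s \<subseteq> poly_maps"
  shows "KK f \<phi>s \<in> poly_fun"
  using assms(2)
proof (induction \<phi>s)
  case Nil thus ?case using pf_comp[OF assms(1), of "\<lambda>z j. z (Inl j)"] by auto
next
  case (Cons \<phi> \<phi>s)
  have "\<forall>i. (\<lambda>z. case_sum (\<phi> (\<lambda>j. z (Inr j))) (\<lambda>j. 0) i) \<in> poly_fun"
  proof
    fix i show "(\<lambda>z. case_sum (\<phi> (\<lambda>j. z (Inr j))) (\<lambda>j. (0::'b)) i) \<in> poly_fun"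
    proof (cases i)
      case (Inl j)
      have "(\<lambda>v. \<phi> v j) \<in> poly_fun" using Cons(2) by (auto simp: poly_maps_def)
      thus ?thesis using Inl pf_comp[of "\<lambda>v. \<phi> v j" "\<lambda>z j. z (Inr j)"] by auto
    qed auto
  qed
  thus ?case using Cons pf_ddv by auto
qed

lemma KK_local:
  assumes "length \<phi>s = length \<psi>s" "\<forall>i<length \<phi>s. (\<phi>s!i) (\<lambda>j. z (Inr j)) = (\<psi>s!i) (\<lambda>j. z (Inr j))"
  shows "KK f \<phi>s z = KK f \<psi>s z"
  using assms
proof (induction \<phi>s arbitrary: \<psi>s z)
  case Nil thus ?case by simp
next
  case (Cons \<phi> \<phi>s)
  then obtain \<psi> \<psi>s' where ps: "\<psi>s = \<psi> # \<psi>s'" by (cases \<psi>s) auto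
  have e: "\<phi> (\<lambda>j. z (Inr j)) = \<psi> (\<lambda>j. z (Inr j))" using Cons(3) ps by force
  have "\<forall>t. KK f \<phi>s (\<lambda>i. z i + t * case_sum (\<phi> (\<lambda>j. z (Inr j))) (\<lambda>j. 0) i)
     = KK f \<psi>s' (\<lambda>i. z i + t * case_sum (\<psi> (\<lambda>j. z (Inr j))) (\<lambda>j. 0) i)"
  proof
    fix t
    show "KK f \<phi>s (\<lambda>i. z i + t * case_sum (\<phi> (\<lambda>j. z (Inr j))) (\<lambda>j. 0) i)
     = KK f \<psi>s' (\<lambda>i. z i + t * case_sum (\<psi> (\<lambda>j. z (Inr j))) (\<lambda>j. 0) i)"
      unfolding e
      apply (rule Cons.IH)
      using Cons(2,3) ps by force+
  qed
  thus ?case using ps by (simp add: dd_cong_line)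
qed

lemma line_inr: "(\<lambda>j. (\<lambda>i. z i + t * case_sum a b i) (Inr j)) = (\<lambda>j. z (Inr j) + t * b j)"
  by simp

lemma KK_x:
  assumes "f \<in> poly_fun" "set \<phi>s \<subseteq> poly_maps"
  shows "dir_deriv (KK f \<phi>s) z (case_sum (\<lambda>j. 0) u)
     = (\<Sum>i<length \<phi>s. KK f (\<phi>s[i := rho u (\<phi>s!i)]) z)"
  using assms(2)
proof (induction \<phi>s arbitrary: z)
  case Nil
  have "\<forall>t. poly [:f (\<lambda>j. z (Inl j)):] t = KK f [] (\<lambda>i. z i + t * case_sum (\<lambda>j. 0) u i)" by simp
  from dd_eqI[OF this] show ?case by simp
next
  case (Cons \<phi> \<phi>s)
  define A where "A = (\<lambda>z::'a + 'a \<Rightarrow> 'b. (case_sum (\<phi> (\<lambda>j. z (Inr j))) (\<lambda>j. 0) :: 'a + 'a \<Rightarrow> 'b))"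
  define b where "b = (case_sum (\<lambda>j. 0) u :: 'a + 'a \<Rightarrow> 'b)"
  have pmphi: "\<phi> \<in> poly_maps" and pms: "set \<phi>s \<subseteq> poly_maps" using Cons by auto
  have KKp: "KK f \<phi>s \<in> poly_fun" using KK_poly assms(1) pms by blast
  have Ap: "\<forall>i. (\<lambda>z. A z i) \<in> poly_fun"
  proof
    fix i show "(\<lambda>z. A z i) \<in> poly_fun"
    proof (cases i)
      case (Inl j)
      have "(\<lambda>v. \<phi> v j) \<in> poly_fun" using pmphi by (auto simp: poly_maps_def)
      thus ?thesis using Inl pf_comp[of "\<lambda>v. \<phi> v j" "\<lambda>z j. z (Inr j)"] by (auto simp: A_def)
    qed (auto simp: A_def)
  qed
  have L: "KK f (\<phi> # \<phi>s) = (\<lambda>z. dir_deriv (KK f \<phi>s) z (A z))" by (simp add: A_def)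
  have 1: "dir_deriv (\<lambda>y. dir_deriv (KK f \<phi>s) y (A z)) z b
       = (\<Sum>i<length \<phi>s. KK f (\<phi> # \<phi>s[i := rho u (\<phi>s!i)]) z)"
  proof -
    have "dir_deriv (\<lambda>y. dir_deriv (KK f \<phi>s) y (A z)) z b = dir_deriv (\<lambda>y. dir_deriv (KK f \<phi>s) y b) z (A z)"
      using dd_schwarz[OF KKp] by blast
    also have "\<dots> = dir_deriv (\<lambda>y. \<Sum>i<length \<phi>s. KK f (\<phi>s[i := rho u (\<phi>s!i)]) y) z (A z)"
      using Cons.IH[OF pms] by (simp add: b_def)
    also have "\<dots> = (\<Sum>i<length \<phi>s. dir_deriv (KK f (\<phi>s[i := rho u (\<phi>s!i)])) z (A z))"
    proof (rule dd_sum)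
      show "\<forall>i\<in>{..<length \<phi>s}. KK f (\<phi>s[i := rho u (\<phi>s ! i)]) \<in> poly_fun"
      proof
        fix i assume "i \<in> {..<length \<phi>s}"
        hence "rho u (\<phi>s!i) \<in> poly_maps" using pms pm_rho nth_mem by blast
        hence "set (\<phi>s[i := rho u (\<phi>s ! i)]) \<subseteq> poly_maps" using pms set_update_subset_insert by fastforce
        thus "KK f (\<phi>s[i := rho u (\<phi>s ! i)]) \<in> poly_fun" using KK_poly assms(1) by blast
      qed
    qed simp
    also have "\<dots> = (\<Sum>i<length \<phi>s. KK f (\<phi> # \<phi>s[i := rho u (\<phi>s!i)]) z)"
      by (simp add: A_def)
    finally show ?thesis .
  qed
  have 2: "(\<lambda>i. dir_deriv (\<lambda>y. A y i) z b) = case_sum (rho u \<phi> (\<lambda>j. z (Inr j))) (\<lambda>j. 0)"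
  proof
    fix i show "dir_deriv (\<lambda>y. A y i) z b = case_sum (rho u \<phi> (\<lambda>j. z (Inr j))) (\<lambda>j. 0) i"
    proof (cases i)
      case (Inl j)
      have "dir_deriv (\<lambda>y. A y i) z b = dir_deriv (\<lambda>x'. \<phi> x' j) (\<lambda>j. z (Inr j)) u"
        by (rule dd_cong_line) (simp add: A_def b_def Inl)
      thus ?thesis by (simp add: Inl rho_def)
    qed (simp add: A_def)
  qed
  have "dir_deriv (KK f (\<phi> # \<phi>s)) z b
     = dir_deriv (\<lambda>y. dir_deriv (KK f \<phi>s) y (A z)) z b + dir_deriv (KK f \<phi>s) z (\<lambda>i. dir_deriv (\<lambda>y. A y i) z b)"
    unfolding L by (rule dd_var[OF KKp Ap])
  also have "\<dots> = (\<Sum>i<length \<phi>s. KK f (\<phi> # \<phi>s[i := rho u (\<phi>s!i)]) z) + KK f (rho u \<phi> # \<phi>s) z"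
    unfolding 1 2 by simp
  also have "\<dots> = (\<Sum>i<length (\<phi> # \<phi>s). KK f ((\<phi> # \<phi>s)[i := rho u ((\<phi> # \<phi>s)!i)]) z)"
    unfolding length_Cons sum.lessThan_Suc_shift by simp
  finally show ?case by (simp only: b_def)
qed

lemma H_deriv:
  assumes "f \<in> poly_fun" "set \<phi>s \<subseteq> poly_maps"
  shows "dir_deriv (\<lambda>x. KK f \<phi>s (case_sum x x)) x w
    = dir_deriv (KK f \<phi>s) (case_sum x x) (case_sum w (\<lambda>j. 0))
      + (\<Sum>i<length \<phi>s. KK f (\<phi>s[i := rho w (\<phi>s!i)]) (case_sum x x))"
proof -
  have KKp: "KK f \<phi>s \<in> poly_fun" using KK_poly assms by blast
  have "dir_deriv (\<lambda>x. KK f \<phi>s (case_sum x x)) x w = dir_deriv (KK f \<phi>s) (case_sum x x) (case_sum w w)"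
  proof (rule dd_cong_line, rule allI)
    fix t
    have "case_sum (\<lambda>i. x i + t * w i) (\<lambda>i. x i + t * w i) = (\<lambda>i. case_sum x x i + t * case_sum w w i)"
      by (rule ext) (simp split: sum.split)
    thus "KK f \<phi>s (case_sum (\<lambda>i. x i + t * w i) (\<lambda>i. x i + t * w i)) = KK f \<phi>s (\<lambda>i. case_sum x x i + t * case_sum w w i)"
      by simp
  qed
  also have "case_sum w w = (\<lambda>i. 1 * case_sum w (\<lambda>j. 0) i + case_sum (\<lambda>j. 0) w i)"
    by (rule ext) (simp split: sum.split)
  also have "dir_deriv (KK f \<phi>s) (case_sum x x) \<dots> = dir_deriv (KK f \<phi>s) (case_sum x x) (case_sum w (\<lambda>j. 0))
      + dir_deriv (KK f \<phi>s) (case_sum x x) (case_sum (\<lambda>j. 0) w)"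
    by (rule trans[OF dd_lin[OF KKp]]) simp
  finally show ?thesis using KK_x[OF assms] by simp
qed

lemma main_vanish:
  fixes f :: "('v \<Rightarrow> 'k::field_char_0) \<Rightarrow> 'k"
  assumes f: "f \<in> poly_fun" and fz: "\<forall>x\<in>Z. f x = 0"
    and Dinv: "\<forall>g\<in>poly_fun. (\<forall>x\<in>Z. g x = 0) \<longrightarrow> (\<forall>x\<in>Z. \<forall>\<psi>\<in>E. dir_deriv g x (\<psi> x) = 0)"
    and EP: "E \<subseteq> poly_maps"
    and rhoE: "\<forall>\<phi>\<in>E. \<forall>\<psi>\<in>E. \<forall>x. \<exists>\<chi>\<in>E. \<chi> x = rho (\<psi> x) \<phi> x"
  shows "length \<phi>s = n \<Longrightarrow> set \<phi>s \<subseteq> E \<Longrightarrow> \<forall>x\<in>Z. KK f \<phi>s (case_sum x x) = 0"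
proof (induction n arbitrary: \<phi>s)
  case 0 thus ?case using fz by simp
next
  case (Suc n)
  then obtain \<psi> \<phi>s' where ps: "\<phi>s = \<psi> # \<phi>s'" by (cases \<phi>s) auto
  have len: "length \<phi>s' = n" and sE: "set \<phi>s' \<subseteq> E" and psiE: "\<psi> \<in> E" using Suc ps by auto
  have sP: "set \<phi>s' \<subseteq> poly_maps" using sE EP by blast
  have IH: "\<forall>x\<in>Z. KK f \<phi>s' (case_sum x x) = 0" using Suc.IH[OF len sE] .
  have cp: "\<forall>i. (\<lambda>z::'v \<Rightarrow> 'k. case_sum z z i) \<in> poly_fun"
  proof
    fix i show "(\<lambda>z::'v \<Rightarrow> 'k. case_sum z z i) \<in> poly_fun" by (cases i) auto
  qed
  have gp: "(\<lambda>x. KK f \<phi>s' (case_sum x x)) \<in> poly_fun"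
    using pf_comp[OF KK_poly[OF f sP] cp] .
  show ?case
  proof
    fix x assume xZ: "x \<in> Z"
    have d0: "dir_deriv (\<lambda>x. KK f \<phi>s' (case_sum x x)) x (\<psi> x) = 0"
      using Dinv[rule_format, OF gp _ xZ psiE] IH by simp
    have s0: "KK f (\<phi>s'[i := rho (\<psi> x) (\<phi>s'!i)]) (case_sum x x) = 0" if i: "i < length \<phi>s'" for i
    proof -
      have "\<phi>s'!i \<in> E" using sE i nth_mem by blast
      then obtain \<chi> where \<chi>: "\<chi> \<in> E" "\<chi> x = rho (\<psi> x) (\<phi>s'!i) x" using rhoE psiE by blast
      have "KK f (\<phi>s'[i := rho (\<psi> x) (\<phi>s'!i)]) (case_sum x x) = KK f (\<phi>s'[i := \<chi>]) (case_sum x x)"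
        by (rule KK_local) (use \<chi> i in \<open>auto simp: nth_list_update\<close>)
      also have "\<dots> = 0"
      proof -
        have "set (\<phi>s'[i := \<chi>]) \<subseteq> E" using sE \<chi>(1) set_update_subset_insert by fastforce
        thus ?thesis using Suc.IH[of "\<phi>s'[i := \<chi>]"] len xZ by simp
      qed
      finally show ?thesis .
    qed
    have "KK f \<phi>s (case_sum x x) = dir_deriv (KK f \<phi>s') (case_sum x x) (case_sum (\<psi> x) (\<lambda>j. 0))"
      using ps by simp
    also have "\<dots> = 0"
      using H_deriv[OF f sP, of x "\<psi> x"] d0 s0 by simp
    finally show "KK f \<phi>s (case_sum x x) = 0" .
  qed
qed

fun DDi :: "nat \<Rightarrow> ('v \<Rightarrow> 'k::field_char_0) \<Rightarrow> (('v \<Rightarrow> 'k) \<Rightarrow> 'k) \<Rightarrow> ('v \<Rightarrow> 'k) \<Rightarrow> 'k" where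
  "DDi 0 w f = f"
| "DDi (Suc d) w f = (\<lambda>y. dir_deriv (DDi d w f) y w)"

lemma KK_rep: "KK f (replicate d \<phi>) (case_sum y x) = DDi d (\<phi> x) f y"
proof (induction d arbitrary: y)
  case 0 thus ?case by (simp add: sum.case_eq_if)
next
  case (Suc d)
  have "KK f (replicate (Suc d) \<phi>) (case_sum y x)
     = dir_deriv (KK f (replicate d \<phi>)) (case_sum y x) (case_sum (\<phi> x) (\<lambda>j. 0))" by simp
  also have "\<dots> = dir_deriv (DDi d (\<phi> x) f) y (\<phi> x)"
  proof (rule dd_cong_line, rule allI)
    fix t
    have "(\<lambda>i. case_sum y x i + t * case_sum (\<phi> x) (\<lambda>j. 0) i) = case_sum (\<lambda>i. y i + t * \<phi> x i) x"
      by (rule ext) (simp split: sum.split)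
    thus "KK f (replicate d \<phi>) (\<lambda>i. case_sum y x i + t * case_sum (\<phi> x) (\<lambda>j. 0) i) = DDi d (\<phi> x) f (\<lambda>i. y i + t * \<phi> x i)"
      using Suc by simp
  qed
  finally show ?case by simp
qed

lemma coeff_pcomp1: "coeff (pcompose q [:s, 1:]) (Suc 0) = poly (pderiv q) (s::'k::field_char_0)"
proof (induction q)
  case 0 thus ?case by simp
next
  case (pCons a q)
  have "coeff (pcompose (pCons a q) [:s, 1:]) (Suc 0) = coeff ([:s,1:] * pcompose q [:s, 1:]) (Suc 0)"
    by (simp add: pcompose_pCons)
  also have "\<dots> = s * coeff (pcompose q [:s, 1:]) (Suc 0) + coeff (pcompose q [:s, 1:]) 0"
    by (simp add: coeff_mult_1)
  also have "coeff (pcompose q [:s, 1:]) 0 = poly q s"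
    by (simp add: poly_0_coeff_0[symmetric] poly_pcompose)
  finally show ?case using pCons by (simp add: pderiv_pCons algebra_simps)
qed

lemma DDi_poly:
  assumes "\<forall>t. poly p t = f (\<lambda>i. y i + t * w i)"
  shows "DDi d w f (\<lambda>i. y i + s * w i) = poly ((pderiv ^^ d) p) s"
proof (induction d arbitrary: s)
  case 0 thus ?case using assms by simp
next
  case (Suc d)
  have "DDi (Suc d) w f (\<lambda>i. y i + s * w i) = dir_deriv (DDi d w f) (\<lambda>i. y i + s * w i) w" by simp
  also have "\<dots> = coeff (pcompose ((pderiv ^^ d) p) [:s, 1:]) 1"
  proof (rule dd_eqI, rule allI)
    fix t
    have "(\<lambda>i. y i + s * w i + t * w i) = (\<lambda>i. y i + (s + t) * w i)" by (simp add: algebra_simps)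
    thus "poly (pcompose ((pderiv ^^ d) p) [:s, 1:]) t = DDi d w f (\<lambda>i. y i + s * w i + t * w i)"
      using Suc by (simp add: poly_pcompose)
  qed
  finally show ?case by (simp add: coeff_pcomp1)
qed

lemma all_DDi_zero:
  fixes f :: "('v \<Rightarrow> 'k::field_char_0) \<Rightarrow> 'k"
  assumes "f \<in> poly_fun" "\<forall>d. DDi d w f y = 0"
  shows "f (\<lambda>i. y i + w i) = 0"
proof -
  obtain p where p: "\<forall>t. poly p t = f (\<lambda>i. y i + t * w i)" using pf_expand assms(1) by blast
  have "coeff p d = 0" for d
  proof -
    have "DDi d w f (\<lambda>i. y i + 0 * w i) = 0" using assms(2) by simp
    hence "poly ((pderiv ^^ d) p) 0 = 0" using DDi_poly[OF p] by metis
    hence "pochhammer (of_nat (Suc 0)) d * coeff p d = (0::'k)"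
      by (simp add: poly_0_coeff_0 coeff_higher_pderiv)
    moreover have "pochhammer (of_nat (Suc 0)) d \<noteq> (0::'k)"
      by (simp add: pochhammer_fact[symmetric])
    ultimately show ?thesis by simp
  qed
  hence "p = 0" by (simp add: poly_eqI)
  thus ?thesis using p[rule_format, of 1] by simp
qed

lemma coeffs_in_W:
  fixes p :: "'n::finite \<Rightarrow> 'k::field_char_0 poly"
  assumes W0: "(\<lambda>k. 0) \<in> W" and Wadd: "\<forall>a\<in>W. \<forall>b\<in>W. (\<lambda>k. a k + b k) \<in> W"
    and Wsc: "\<forall>a\<in>W. \<forall>c. (\<lambda>k. c * a k) \<in> W"
  shows "finite F \<Longrightarrow> \<forall>s. s \<notin> F \<longrightarrow> (\<lambda>k. poly (p k) s) \<in> W \<Longrightarrow> \<forall>k. degree (p k) \<le> N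
     \<Longrightarrow> (\<lambda>k. coeff (p k) j) \<in> W"
proof (induction N arbitrary: p F j)
  case 0
  obtain s where s: "s \<notin> F" using ex_new_if_finite[OF infinite_UNIV_char_0 0(1)] by blast
  have "(\<lambda>k. poly (p k) s) = (\<lambda>k. coeff (p k) 0)"
  proof
    fix k have "degree (p k) = 0" using 0(3) by simp
    thus "poly (p k) s = coeff (p k) 0" by (auto elim: degree_eq_zeroE)
  qed
  hence c0: "(\<lambda>k. coeff (p k) 0) \<in> W" using 0(2) s by metis
  show ?case
  proof (cases j)
    case 0 thus ?thesis using c0 by simp
  next
    case (Suc j')
    have "(\<lambda>k. coeff (p k) j) = (\<lambda>k. 0)" using 0(3) Suc by (auto intro!: ext coeff_eq_0)
    thus ?thesis using W0 by simp
  qed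
next
  case (Suc N)
  note sc = Wsc[rule_format] and ad = Wadd[rule_format]
  obtain s0 where s0: "s0 \<notin> F" using ex_new_if_finite[OF infinite_UNIV_char_0 Suc(2)] by blast
  define q where "q = (\<lambda>k. synthetic_div (p k) s0)"
  have pq: "p k = [:-s0, 1:] * q k + [:poly (p k) s0:]" for k
    unfolding q_def by (rule synthetic_div_correct'[symmetric])
  have ps0: "(\<lambda>k. poly (p k) s0) \<in> W" using Suc(3) s0 by blast
  have qW: "\<forall>s. s \<notin> insert s0 F \<longrightarrow> (\<lambda>k. poly (q k) s) \<in> W"
  proof (intro allI impI)
    fix s assume s: "s \<notin> insert s0 F"
    have psW: "(\<lambda>k. poly (p k) s) \<in> W" using Suc(3) s by blast
    have m1: "(\<lambda>k. (- 1) * poly (p k) s0) \<in> W" using sc[OF ps0] .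
    have m2: "(\<lambda>k. poly (p k) s + (- 1) * poly (p k) s0) \<in> W" using ad[OF psW m1] .
    have "(\<lambda>k. (1 / (s - s0)) * (poly (p k) s + (- 1) * poly (p k) s0)) \<in> W" using sc[OF m2] .
    moreover have "(\<lambda>k. (1 / (s - s0)) * (poly (p k) s + (- 1) * poly (p k) s0)) = (\<lambda>k. poly (q k) s)"
    proof
      fix k
      have "poly (p k) s = (s - s0) * poly (q k) s + poly (p k) s0"
        by (subst pq) (simp add: algebra_simps)
      thus "(1 / (s - s0)) * (poly (p k) s + (- 1) * poly (p k) s0) = poly (q k) s"
        using s by (simp add: field_simps)
    qed
    ultimately show "(\<lambda>k. poly (q k) s) \<in> W" by simp
  qed
  have qd: "\<forall>k. degree (q k) \<le> N" using Suc(4) by (simp add: q_def degree_synthetic_div le_diff_conv)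
  have qc: "(\<lambda>k. coeff (q k) i) \<in> W" for i
    using Suc.IH[of "insert s0 F" q] Suc(2) qW qd by blast
  have cp: "coeff (p k) j = - s0 * coeff (q k) j + (case j of 0 \<Rightarrow> poly (p k) s0 | Suc j' \<Rightarrow> coeff (q k) j')" for k
  proof -
    have "[:-s0, 1:] * q k = Polynomial.smult (-s0) (q k) + pCons 0 (q k)" by (simp add: mult_pCons_left)
    hence "coeff (p k) j = coeff (Polynomial.smult (-s0) (q k) + pCons 0 (q k) + [:poly (p k) s0:]) j"
      using pq[of k] by simp
    thus ?thesis by (cases j) auto
  qed
  have m: "(\<lambda>k. (- s0) * coeff (q k) j) \<in> W" using sc[OF qc] .
  show ?case
  proof (cases j)
    case 0
    thus ?thesis using ad[OF m ps0] cp by (simp add: 0)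
  next
    case (Suc j')
    thus ?thesis using ad[OF m qc[of j']] cp by simp
  qed
qed

lemma ss_facts:
  assumes "semigroup_subspace E"
  shows "E \<subseteq> poly_maps" "(\<lambda>v. (\<lambda>i. 0)) \<in> E"
    "\<phi> \<in> E \<Longrightarrow> \<psi> \<in> E \<Longrightarrow> (\<lambda>v. (\<lambda>i. \<phi> v i + \<psi> v i)) \<in> E"
    "\<phi> \<in> E \<Longrightarrow> (\<lambda>v. (\<lambda>i. c * \<phi> v i)) \<in> E"
    "\<phi> \<in> E \<Longrightarrow> \<psi> \<in> E \<Longrightarrow> \<phi> \<circ> \<psi> \<in> E" "id \<in> E"
  using assms unfolding semigroup_subspace_def by auto

lemma ss_orbit_closed:
  assumes "semigroup_subspace E"
  shows "(\<lambda>k. 0) \<in> orbit_E E x" "\<forall>a\<in>orbit_E E x. \<forall>b\<in>orbit_E E x. (\<lambda>k. a k + b k) \<in> orbit_E E x"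
    "\<forall>a\<in>orbit_E E x. \<forall>c. (\<lambda>k. c * a k) \<in> orbit_E E x"
proof -
  note f = ss_facts[OF assms]
  show "(\<lambda>k. 0) \<in> orbit_E E x" unfolding orbit_E_def using f(2) by force
  show "\<forall>a\<in>orbit_E E x. \<forall>b\<in>orbit_E E x. (\<lambda>k. a k + b k) \<in> orbit_E E x"
  proof (intro ballI)
    fix a b assume "a \<in> orbit_E E x" "b \<in> orbit_E E x"
    then obtain \<phi> \<psi> where "\<phi> \<in> E" "\<psi> \<in> E" "a = \<phi> x" "b = \<psi> x" unfolding orbit_E_def by blast
    moreover have "(\<lambda>v. (\<lambda>i. \<phi> v i + \<psi> v i)) \<in> E" using f(3) calculation by blast
    ultimately show "(\<lambda>k. a k + b k) \<in> orbit_E E x" unfolding orbit_E_def by force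
  qed
  show "\<forall>a\<in>orbit_E E x. \<forall>c. (\<lambda>k. c * a k) \<in> orbit_E E x"
  proof (intro ballI allI)
    fix a c assume "a \<in> orbit_E E x"
    then obtain \<phi> where "\<phi> \<in> E" "a = \<phi> x" unfolding orbit_E_def by blast
    moreover have "(\<lambda>v. (\<lambda>i. c * \<phi> v i)) \<in> E" using f(4) calculation by blast
    ultimately show "(\<lambda>k. c * a k) \<in> orbit_E E x" unfolding orbit_E_def by force
  qed
qed

lemma ss_shift:
  assumes "semigroup_subspace E" "\<psi> \<in> E"
  shows "(\<lambda>v i. v i + s * \<psi> v i) \<in> E"
  using ss_facts(3)[OF assms(1) ss_facts(6)[OF assms(1)] ss_facts(4)[OF assms(1) assms(2), of s]] by simp

lemma rho_in_E:
  fixes E :: "(('n::finite \<Rightarrow> 'k::field_char_0) \<Rightarrow> ('n \<Rightarrow> 'k)) set"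
  assumes ss: "semigroup_subspace E" and "\<phi> \<in> E" "\<psi> \<in> E"
  shows "\<exists>\<chi>\<in>E. \<chi> x = rho (\<psi> x) \<phi> x"
proof -
  have EP: "E \<subseteq> poly_maps" using ss by (simp add: semigroup_subspace_def)
  have "\<forall>k. \<exists>p. \<forall>t. poly p t = \<phi> (\<lambda>i. x i + t * \<psi> x i) k"
  proof
    fix k
    have "(\<lambda>v. \<phi> v k) \<in> poly_fun" using EP assms(2) by (auto simp: poly_maps_def)
    from pf_expand[OF this] show "\<exists>p. \<forall>t. poly p t = \<phi> (\<lambda>i. x i + t * \<psi> x i) k" .
  qed
  then obtain p where p: "\<forall>k t. poly (p k) t = \<phi> (\<lambda>i. x i + t * \<psi> x i) k" by metis
  have rc: "rho (\<psi> x) \<phi> x = (\<lambda>k. coeff (p k) 1)"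
  proof
    fix k
    have "\<forall>t. poly (p k) t = (\<lambda>x'. \<phi> x' k) (\<lambda>i. x i + t * \<psi> x i)" using p by simp
    from dd_eqI[OF this] show "rho (\<psi> x) \<phi> x k = coeff (p k) 1" by (simp add: rho_def)
  qed
  have pv: "\<forall>s. s \<notin> {} \<longrightarrow> (\<lambda>k. poly (p k) s) \<in> orbit_E E x"
  proof (intro allI impI)
    fix s
    have "\<phi> \<circ> (\<lambda>v i. v i + s * \<psi> v i) \<in> E"
      using ss_facts(5)[OF ss assms(2) ss_shift[OF ss assms(3)]] .
    moreover have "(\<lambda>k. poly (p k) s) = (\<phi> \<circ> (\<lambda>v i. v i + s * \<psi> v i)) x" using p by auto
    ultimately show "(\<lambda>k. poly (p k) s) \<in> orbit_E E x" unfolding orbit_E_def by blast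
  qed
  have "\<forall>k. degree (p k) \<le> Max (range (\<lambda>k. degree (p k)))" by simp
  from coeffs_in_W[OF ss_orbit_closed[OF ss] _ pv this] have "(\<lambda>k. coeff (p k) 1) \<in> orbit_E E x" by simp
  thus ?thesis using rc unfolding orbit_E_def by auto
qed

lemma Dinv_imp_stable:
  fixes E :: "(('n::finite \<Rightarrow> 'k::field_char_0) \<Rightarrow> ('n \<Rightarrow> 'k)) set"
  assumes ss: "semigroup_subspace E" and D: "D_invariant E Z"
  shows "E_stable E Z"
proof -
  have EP: "E \<subseteq> poly_maps" using ss by (simp add: semigroup_subspace_def)
  obtain F where F: "F \<subseteq> poly_fun" "Z = {v. \<forall>f\<in>F. f v = 0}"
    using D by (auto simp: D_invariant_def zariski_closed_def)
  have Dinv: "\<forall>g\<in>poly_fun. (\<forall>x\<in>Z. g x = 0) \<longrightarrow> (\<forall>x\<in>Z. \<forall>\<psi>\<in>E. dir_deriv g x (\<psi> x) = 0)"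
  proof (intro ballI impI)
    fix g x \<psi> assume g: "g \<in> poly_fun" "\<forall>x\<in>Z. g x = 0" and x: "x \<in> Z" and \<psi>: "\<psi> \<in> E"
    have "\<psi> \<in> vfields E" unfolding vfields_def using \<psi> by auto
    hence "\<psi> x \<in> tangent_space Z x" using D x by (auto simp: D_invariant_def)
    hence "\<forall>f\<in>poly_fun. (\<forall>x\<in>Z. f x = 0) \<longrightarrow> dir_deriv f x (\<psi> x) = 0"
      by (simp add: tangent_space_def)
    thus "dir_deriv g x (\<psi> x) = 0" using g by blast
  qed
  have rhoE: "\<forall>\<phi>\<in>E. \<forall>\<psi>\<in>E. \<forall>x. \<exists>\<chi>\<in>E. \<chi> x = rho (\<psi> x) \<phi> x" using rho_in_E[OF ss] by blast
  show ?thesis unfolding E_stable_def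
  proof (intro ballI subsetI)
    fix \<phi> y assume \<phi>: "\<phi> \<in> E" and "y \<in> \<phi> ` Z"
    then obtain x where x: "x \<in> Z" "y = \<phi> x" by blast
    define \<psi> where "\<psi> = (\<lambda>v. (\<lambda>i. (-1) * v i + \<phi> v i))"
    have \<psi>E: "\<psi> \<in> E"
      using ss_facts(3)[OF ss ss_facts(4)[OF ss ss_facts(6)[OF ss], of "-1"] \<phi>] by (simp add: \<psi>_def)
    have "\<forall>f\<in>F. f y = 0"
    proof
      fix f assume fF: "f \<in> F"
      have f: "f \<in> poly_fun" and fz: "\<forall>x\<in>Z. f x = 0" using F fF by auto
      have "\<forall>d. DDi d (\<psi> x) f x = 0"
      proof
        fix d
        have "set (replicate d \<psi>) \<subseteq> E" using \<psi>E by auto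
        hence "KK f (replicate d \<psi>) (case_sum x x) = 0"
          using main_vanish[OF f fz Dinv EP rhoE, of "replicate d \<psi>" d] x by simp
        thus "DDi d (\<psi> x) f x = 0" by (simp add: KK_rep)
      qed
      from all_DDi_zero[OF f this] show "f y = 0" using x by (simp add: \<psi>_def)
    qed
    thus "y \<in> Z" using F by simp
  qed
qed

lemma stable_imp_Dinv:
  fixes E :: "(('n::finite \<Rightarrow> 'k::field_char_0) \<Rightarrow> ('n \<Rightarrow> 'k)) set"
  assumes ss: "semigroup_subspace E" and Y: "zariski_closed Y" and st: "E_stable E Y"
  shows "D_invariant E Y"
  unfolding D_invariant_def
proof (intro conjI ballI Y)
  fix y \<xi> assume y: "y \<in> Y" and "\<xi> \<in> vfields E"
  then obtain \<phi> where \<phi>: "\<phi> \<in> E" "\<xi> = \<phi>" unfolding vfields_def by auto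
  show "\<xi> y \<in> tangent_space Y y" unfolding tangent_space_def
  proof (intro CollectI ballI impI)
    fix f assume "f \<in> poly_fun" and fz: "\<forall>x\<in>Y. f x = 0"
    have "\<forall>t. poly 0 t = f (\<lambda>i. y i + t * \<xi> y i)"
    proof
      fix t
      have sh: "(\<lambda>v i. v i + t * \<phi> v i) \<in> E" using ss_shift[OF ss \<phi>(1)] .
      have "(\<lambda>v i. v i + t * \<phi> v i) ` Y \<subseteq> Y" using st sh unfolding E_stable_def by (rule bspec)
      hence "(\<lambda>i. y i + t * \<phi> y i) \<in> Y" using y by blast
      thus "poly 0 t = f (\<lambda>i. y i + t * \<xi> y i)" using fz \<phi> by simp
    qed
    from dd_eqI[OF this] show "dir_deriv f y (\<xi> y) = 0" by simp
  qed
qed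

definition fsc :: "'k::field \<Rightarrow> ('n \<Rightarrow> 'k) \<Rightarrow> ('n \<Rightarrow> 'k)" where
  "fsc c f = (\<lambda>i. c * f i)"

interpretation fv: vector_space "fsc :: 'k::field \<Rightarrow> ('n \<Rightarrow> 'k) \<Rightarrow> ('n \<Rightarrow> 'k)"
  by unfold_locales (auto simp: fsc_def algebra_simps)

interpretation ks: vector_space "(*) :: 'k::field \<Rightarrow> 'k \<Rightarrow> 'k"
  by unfold_locales (auto simp: algebra_simps)

interpretation fvp: vector_space_pair "fsc :: 'k::field \<Rightarrow> ('n \<Rightarrow> 'k) \<Rightarrow> ('n \<Rightarrow> 'k)" "(*) :: 'k \<Rightarrow> 'k \<Rightarrow> 'k"
  by unfold_locales

definition ebasis :: "'n \<Rightarrow> ('n \<Rightarrow> 'k::field)" where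
  "ebasis j = (\<lambda>i. if i = j then 1 else 0)"

lemma sum_fun_apply: "(\<Sum>j\<in>S. f j) i = (\<Sum>j\<in>S. f j i)"
  by (induction S rule: infinite_finite_induct) auto

lemma fv_expand: "(x :: 'n::finite \<Rightarrow> 'k::field) = (\<Sum>j\<in>UNIV. fsc (x j) (ebasis j))"
proof
  fix i
  have "(\<Sum>j\<in>UNIV. fsc (x j) (ebasis j)) i = (\<Sum>j\<in>UNIV. fsc (x j) (ebasis j) i)"
    by (rule sum_fun_apply)
  also have "\<dots> = (\<Sum>j\<in>UNIV. if j = i then x j else 0)"
    by (rule sum.cong) (auto simp: fsc_def ebasis_def)
  also have "\<dots> = x i" by simp
  finally show "x i = (\<Sum>j\<in>UNIV. fsc (x j) (ebasis j)) i" by simp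
qed

interpretation fvf: finite_dimensional_vector_space "fsc :: 'k::field \<Rightarrow> ('n::finite \<Rightarrow> 'k) \<Rightarrow> ('n \<Rightarrow> 'k)" "range ebasis"
proof unfold_locales
  show "finite (range (ebasis :: 'n \<Rightarrow> 'n \<Rightarrow> 'k))" by simp
next
  show "fv.independent (range (ebasis :: 'n \<Rightarrow> 'n \<Rightarrow> 'k))"
    unfolding fv.dependent_def
  proof
    assume "\<exists>a\<in>range (ebasis :: 'n \<Rightarrow> 'n \<Rightarrow> 'k). a \<in> fv.span (range ebasis - {a})"
    then obtain j where j: "(ebasis j :: 'n \<Rightarrow> 'k) \<in> fv.span (range ebasis - {ebasis j})" by blast
    have "fv.subspace {x :: 'n \<Rightarrow> 'k. x j = 0}"
      by (auto simp: fv.subspace_def fsc_def)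
    moreover have "range ebasis - {ebasis j} \<subseteq> {x :: 'n \<Rightarrow> 'k. x j = 0}"
      by (auto simp: ebasis_def)
    ultimately have "fv.span (range ebasis - {ebasis j}) \<subseteq> {x :: 'n \<Rightarrow> 'k. x j = 0}"
      using fv.span_minimal by blast
    with j show False by (auto simp: ebasis_def)
  qed
next
  have "x \<in> fv.span (range ebasis)" for x :: "'n \<Rightarrow> 'k"
  proof -
    have "(\<Sum>j\<in>UNIV. fsc (x j) (ebasis j)) \<in> fv.span (range ebasis)"
      by (intro fv.span_sum fv.span_scale fv.span_base) auto
    thus "x \<in> fv.span (range ebasis)" using fv_expand[of x] by simp
  qed
  thus "fv.span (range (ebasis :: 'n \<Rightarrow> 'n \<Rightarrow> 'k)) = UNIV" by blast
qed

lemma linear_poly: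
  assumes "Vector_Spaces.linear fsc ((*) :: 'k \<Rightarrow> 'k \<Rightarrow> 'k) (l :: ('n::finite \<Rightarrow> 'k::field_char_0) \<Rightarrow> 'k)"
  shows "l \<in> poly_fun"
proof -
  have eq: "l x = (\<Sum>j\<in>UNIV. x j * l (ebasis j))" for x
  proof -
    have "l x = l (\<Sum>j\<in>UNIV. fsc (x j) (ebasis j))" using fv_expand[of x] by simp
    also have "\<dots> = (\<Sum>j\<in>UNIV. x j * l (ebasis j))"
      unfolding fvp.linear_sum[OF assms] fvp.linear_scale[OF assms] by simp
    finally show ?thesis .
  qed
  have "l = (\<lambda>x. \<Sum>j\<in>UNIV. x j * l (ebasis j))" using eq by (intro ext)
  moreover have "(\<lambda>x. \<Sum>j\<in>UNIV. x j * l (ebasis j)) \<in> poly_fun"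
    by (rule pf_sum) auto
  ultimately show ?thesis by simp
qed

lemma orbit_subspace:
  assumes ss: "semigroup_subspace E"
  shows "fv.subspace (orbit_E E v)"
proof -
  note c = ss_orbit_closed[OF ss, of v]
  show ?thesis unfolding fv.subspace_def
  proof (intro conjI ballI allI)
    show "0 \<in> orbit_E E v" using c(1) by (simp add: zero_fun_def)
  next
    fix x y assume "x \<in> orbit_E E v" "y \<in> orbit_E E v"
    thus "x + y \<in> orbit_E E v" using c(2) by (simp add: plus_fun_def)
  next
    fix a x assume "x \<in> orbit_E E v"
    thus "fsc a x \<in> orbit_E E v" using c(3) by (simp add: fsc_def)
  qed
qed

lemma separate:
  fixes W :: "('n::finite \<Rightarrow> 'k::field) set"
  assumes sub: "fv.subspace W" and u: "u \<notin> W"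
  shows "\<exists>l. Vector_Spaces.linear fsc ((*) :: 'k \<Rightarrow> 'k \<Rightarrow> 'k) l \<and> (\<forall>w\<in>W. l w = 0) \<and> l u = 1"
proof -
  obtain B where B: "B \<subseteq> W" "fv.independent B" "W \<subseteq> fv.span B" "card B = fv.dim W"
    by (rule fv.basis_exists)
  have "fv.span B \<subseteq> W" using fv.span_minimal[OF B(1) sub] .
  hence uB: "u \<notin> fv.span B" using u by (rule contra_subsetD)
  have ind: "fv.independent (insert u B)" using fv.independent_insertI[OF uB B(2)] .
  obtain l where l: "Vector_Spaces.linear fsc ((*) :: 'k \<Rightarrow> 'k \<Rightarrow> 'k) l"
    "\<forall>x\<in>insert u B. l x = (if x = u then 1 else 0)"
    using fvp.linear_independent_extend[OF ind, of "\<lambda>x. if x = u then 1 else 0"] by (elim exE conjE)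
  have l0: "l x = 0" if x: "x \<in> B" for x
  proof -
    have "x \<in> W" using B(1) x by (rule subsetD)
    hence "x \<noteq> u" using u by metis
    thus ?thesis using l(2) x by simp
  qed
  have "\<forall>w\<in>W. l w = 0"
  proof
    fix w assume "w \<in> W"
    hence "w \<in> fv.span B" using B(3) by (rule subsetD[rotated])
    thus "l w = 0" using fvp.linear_eq_0_on_span[OF l(1) l0] by simp
  qed
  moreover have "l u = 1" using l(2) by simp
  ultimately show ?thesis using l(1) by (intro exI[of _ l]) simp
qed

lemma orbit_closed:
  fixes E :: "(('n::finite \<Rightarrow> 'k::field_char_0) \<Rightarrow> ('n \<Rightarrow> 'k)) set"
  assumes ss: "semigroup_subspace E"
  shows "zariski_closed (orbit_E E v)"
  unfolding zariski_closed_def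
proof (intro exI conjI)
  let ?F = "{f \<in> poly_fun. \<forall>x\<in>orbit_E E v. f x = 0}"
  show "?F \<subseteq> poly_fun" by blast
  show "orbit_E E v = {u. \<forall>f\<in>?F. f u = 0}"
  proof (intro equalityI subsetI)
    fix u assume uo: "u \<in> orbit_E E v"
    show "u \<in> {u. \<forall>f\<in>?F. f u = 0}"
    proof (intro CollectI ballI)
      fix f assume "f \<in> ?F" thus "f u = 0" using uo by simp
    qed
  next
    fix u assume u: "u \<in> {u. \<forall>f\<in>?F. f u = 0}"
    show "u \<in> orbit_E E v"
    proof (rule ccontr)
      assume "u \<notin> orbit_E E v"
      then obtain l where l: "Vector_Spaces.linear fsc ((*) :: 'k \<Rightarrow> 'k \<Rightarrow> 'k) l"
        "\<forall>w\<in>orbit_E E v. l w = 0" "l u = 1"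
        using separate[OF orbit_subspace[OF ss]] by blast
      have lF: "l \<in> ?F" using linear_poly[OF l(1)] l(2) by simp
      have "\<forall>f\<in>?F. f u = 0" using u by (rule CollectD)
      hence "l u = 0" using lF by (rule bspec)
      with l(3) show False by simp
    qed
  qed
qed

lemma orbit_memI: "\<psi> \<in> E \<Longrightarrow> x = \<psi> v \<Longrightarrow> x \<in> orbit_E E v"
  unfolding orbit_E_def by blast

lemma E_sum:
  assumes ss: "semigroup_subspace E" and "finite S" "\<forall>j\<in>S. \<phi> j \<in> E"
  shows "(\<lambda>x k. \<Sum>j\<in>S. a j * \<phi> j x k) \<in> E"
  using assms(2,3)
proof (induction S rule: finite_induct)
  case empty
  thus ?case using ss_facts(2)[OF ss] by simp
next
  case (insert j S)
  have A: "(\<lambda>x k. a j * \<phi> j x k) \<in> E" using ss_facts(4)[OF ss, of "\<phi> j" "a j"] insert by simp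
  have B: "(\<lambda>x k. \<Sum>j\<in>S. a j * \<phi> j x k) \<in> E" using insert by simp
  show ?case using ss_facts(3)[OF ss A B] insert by simp
qed

lemma open_part:
  fixes E :: "(('n::finite \<Rightarrow> 'k::field_char_0) \<Rightarrow> ('n \<Rightarrow> 'k)) set"
  assumes ss: "semigroup_subspace E"
  shows "\<exists>U. zariski_open_in (orbit_E E v) U \<and> v \<in> U \<and> (\<forall>w\<in>U. orbit_E E w = orbit_E E v)"
proof -
  define W where "W = orbit_E E v"
  have sub: "fv.subspace W" unfolding W_def by (rule orbit_subspace[OF ss])
  have EP: "E \<subseteq> poly_maps" using ss_facts(1)[OF ss] .
  obtain B where B: "B \<subseteq> W" "fv.independent B" "W \<subseteq> fv.span B" "card B = fv.dim W"
    by (rule fv.basis_exists)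
  have finB: "finite B" using fvf.finiteI_independent[OF B(2)] .
  obtain bs where bs: "distinct bs" "set bs = B" using finite_distinct_list[OF finB] by blast
  define m where "m = length bs"
  have "\<forall>i. \<exists>l. Vector_Spaces.linear fsc ((*) :: 'k \<Rightarrow> 'k \<Rightarrow> 'k) l \<and> (\<forall>x\<in>B. l x = (if x = bs!i then 1 else 0))"
  proof
    fix i
    show "\<exists>l. Vector_Spaces.linear fsc ((*) :: 'k \<Rightarrow> 'k \<Rightarrow> 'k) l \<and> (\<forall>x\<in>B. l x = (if x = bs!i then 1 else 0))"
      using fvp.linear_independent_extend[OF B(2), of "\<lambda>x. if x = bs!i then 1 else 0"] .
  qed
  then obtain lf where lf: "\<forall>i. Vector_Spaces.linear fsc ((*) :: 'k \<Rightarrow> 'k \<Rightarrow> 'k) (lf i) \<and> (\<forall>x\<in>B. lf i x = (if x = bs!i then 1 else 0))"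
    by (rule choice[THEN exE])
  have lflin: "Vector_Spaces.linear fsc ((*) :: 'k \<Rightarrow> 'k \<Rightarrow> 'k) (lf i)" for i using lf by blast
  have lfB: "x \<in> B \<Longrightarrow> lf i x = (if x = bs!i then 1 else 0)" for i x using lf by blast
  have lfdelta: "lf i (bs!j) = (if j = i then 1 else 0)" if "i < m" "j < m" for i j
  proof -
    have "bs!j \<in> B" using that bs(2) m_def by auto
    moreover have "(bs!j = bs!i) = (j = i)" using that bs(1) m_def by (simp add: nth_eq_iff_index_eq)
    ultimately show ?thesis using lfB by simp
  qed
  have "\<forall>j. \<exists>\<phi>. \<phi> \<in> E \<and> (j < m \<longrightarrow> \<phi> v = bs!j)"
  proof
    fix j
    show "\<exists>\<phi>. \<phi> \<in> E \<and> (j < m \<longrightarrow> \<phi> v = bs!j)"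
    proof (cases "j < m")
      case True
      hence "bs!j \<in> W" using bs(2) B(1) m_def by auto
      then obtain \<phi> where "\<phi> \<in> E" "bs!j = \<phi> v" unfolding W_def orbit_E_def by blast
      thus ?thesis by auto
    next
      case False thus ?thesis using ss_facts(6)[OF ss] by blast
    qed
  qed
  then obtain \<phi> where \<phi>: "\<forall>j. \<phi> j \<in> E \<and> (j < m \<longrightarrow> \<phi> j v = bs!j)"
    by (rule choice[THEN exE])
  have \<phi>E: "\<phi> j \<in> E" for j using \<phi> by blast
  have \<phi>v: "j < m \<Longrightarrow> \<phi> j v = bs!j" for j using \<phi> by blast
  define P where "P = (\<lambda>w. mat m m (\<lambda>(i,j). lf i (\<phi> j w)))"
  define g where "g = (\<lambda>w. det (P w))"
  have entp: "(\<lambda>w. lf i (\<phi> j w)) \<in> poly_fun" for i j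
  proof -
    have "\<forall>k. (\<lambda>w. \<phi> j w k) \<in> poly_fun" using \<phi>E EP by (auto simp: poly_maps_def)
    thus ?thesis using pf_comp[OF linear_poly[OF lflin]] by blast
  qed
  let ?Perm = "{p. p permutes {0..<m}}"
  have gform: "g = (\<lambda>w. \<Sum>p\<in>?Perm. signof p * (\<Prod>i\<in>{0..<m}. lf i (\<phi> (p i) w)))"
  proof
    fix w
    have "g w = (\<Sum>p\<in>?Perm. signof p * (\<Prod>i = 0..<m. P w $$ (i, p i)))"
      unfolding g_def P_def by (rule det_def'[OF mat_carrier])
    also have "\<dots> = (\<Sum>p\<in>?Perm. signof p * (\<Prod>i\<in>{0..<m}. lf i (\<phi> (p i) w)))"
    proof (rule sum.cong[OF refl])
      fix p assume "p \<in> ?Perm"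
      hence pp: "p permutes {0..<m}" by simp
      have "(\<Prod>i = 0..<m. P w $$ (i, p i)) = (\<Prod>i\<in>{0..<m}. lf i (\<phi> (p i) w))"
      proof (rule prod.cong[OF refl])
        fix i assume i: "i \<in> {0..<m}"
        hence "p i \<in> {0..<m}" using permutes_in_image[OF pp] by simp
        thus "P w $$ (i, p i) = lf i (\<phi> (p i) w)" using i by (simp add: P_def)
      qed
      thus "signof p * (\<Prod>i = 0..<m. P w $$ (i, p i)) = signof p * (\<Prod>i\<in>{0..<m}. lf i (\<phi> (p i) w))"
        by simp
    qed
    finally show "g w = (\<Sum>p\<in>?Perm. signof p * (\<Prod>i\<in>{0..<m}. lf i (\<phi> (p i) w)))" .
  qed
  have gp: "g \<in> poly_fun"
    unfolding gform
  proof (rule pf_sum, rule ballI)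
    fix p
    have "(\<lambda>w. \<Prod>i\<in>{0..<m}. lf i (\<phi> (p i) w)) \<in> poly_fun" using entp by (intro pf_prod) auto
    thus "(\<lambda>w. signof p * (\<Prod>i\<in>{0..<m}. lf i (\<phi> (p i) w))) \<in> poly_fun"
      using poly_fun.mult[OF poly_fun.const] by blast
  qed
  define Zc where "Zc = {w. g w = 0}"
  have Zcc: "zariski_closed Zc" unfolding zariski_closed_def Zc_def using gp by (intro exI[of _ "{g}"]) auto
  define U where "U = W - Zc"
  have Pv: "P v = 1\<^sub>m m"
    by (rule eq_matI) (auto simp: P_def \<phi>v lfdelta)
  have vW: "v \<in> W"
  proof -
    have "v = id v \<and> id \<in> E" using ss_facts(6)[OF ss] by simp
    thus ?thesis unfolding W_def orbit_E_def by blast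
  qed
  have vU: "v \<in> U" using Pv vW by (simp add: U_def Zc_def g_def)
  have main: "orbit_E E w = W" if wU: "w \<in> U" for w
  proof -
    have wW: "w \<in> W" and gw: "det (P w) \<noteq> 0" using wU by (auto simp: U_def Zc_def g_def)
    obtain \<zeta> where \<zeta>: "\<zeta> \<in> E" "w = \<zeta> v" using wW unfolding W_def orbit_E_def by blast
    have PC: "P w \<in> carrier_mat m m" by (simp add: P_def)
    from det_non_zero_imp_unit[OF PC gw, unfolded Units_def, of "()"]
    obtain Bi where Bi: "Bi \<in> carrier_mat m m" "P w * Bi = 1\<^sub>m m" by (auto simp: ring_mat_def)
    define t where "t = vec m (\<lambda>i. lf i v)"
    define c where "c = Bi *\<^sub>v t"
    have tc: "t \<in> carrier_vec m" by (simp add: t_def)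
    have cc: "dim_vec c = m" using Bi(1) by (simp add: c_def)
    have Pc: "P w *\<^sub>v c = t"
    proof -
      have "P w *\<^sub>v c = (P w * Bi) *\<^sub>v t" unfolding c_def using PC Bi(1) tc by simp
      thus ?thesis using Bi(2) tc by simp
    qed
    define \<chi> where "\<chi> = (\<lambda>x k. \<Sum>j\<in>{0..<m}. c $ j * \<phi> j x k)"
    have \<chi>E: "\<chi> \<in> E" unfolding \<chi>_def by (rule E_sum[OF ss]) (auto simp: \<phi>E)
    have \<chi>w: "\<chi> w = (\<Sum>j\<in>{0..<m}. fsc (c $ j) (\<phi> j w))"
      by (rule ext) (simp add: \<chi>_def sum_fun_apply fsc_def)
    have l\<chi>: "lf i (\<chi> w) = lf i v" if i: "i < m" for i
    proof -
      have "lf i (\<chi> w) = (\<Sum>j\<in>{0..<m}. c $ j * lf i (\<phi> j w))"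
        unfolding \<chi>w fvp.linear_sum[OF lflin] fvp.linear_scale[OF lflin] ..
      also have "\<dots> = (P w *\<^sub>v c) $ i"
        using i cc by (simp add: P_def scalar_prod_def mult.commute)
      also have "\<dots> = lf i v" using Pc i by (simp add: t_def)
      finally show ?thesis .
    qed
    have \<chi>W: "\<chi> w \<in> W"
    proof -
      have "\<chi> \<circ> \<zeta> \<in> E" using ss_facts(5)[OF ss \<chi>E \<zeta>(1)] .
      thus ?thesis unfolding W_def using \<zeta>(2) by (intro orbit_memI[of "\<chi> \<circ> \<zeta>"]) auto
    qed
    define d where "d = \<chi> w - v"
    have dW: "d \<in> W" unfolding d_def using fv.subspace_diff[OF sub \<chi>W vW] .
    have ld: "lf i d = 0" if "i < m" for i
      unfolding d_def fvp.linear_diff[OF lflin] using l\<chi>[OF that] by simp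
    have "d \<in> fv.span B" using dW B(3) by (rule subsetD[rotated])
    then obtain a where a: "d = (\<Sum>b\<in>B. fsc (a b) b)" unfolding fv.span_finite[OF finB] by blast
    have a0: "a b = 0" if bB: "b \<in> B" for b
    proof -
      obtain i where i: "i < m" "b = bs!i" using bB bs(2) m_def by (auto simp: in_set_conv_nth)
      have "lf i d = (\<Sum>x\<in>B. a x * lf i x)"
        unfolding a fvp.linear_sum[OF lflin] fvp.linear_scale[OF lflin] ..
      also have "\<dots> = (\<Sum>x\<in>B. if x = b then a x else 0)"
        by (rule sum.cong[OF refl]) (simp add: lfB i(2))
      also have "\<dots> = a b" using bB finB by simp
      finally show ?thesis using ld[OF i(1)] by simp
    qed
    have "d = 0" unfolding a by (rule sum.neutral) (simp add: a0 fsc_def zero_fun_def)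
    hence \<chi>v: "\<chi> w = v" unfolding d_def by simp
    show ?thesis
    proof (intro equalityI subsetI)
      fix x assume "x \<in> orbit_E E w"
      then obtain \<psi> where \<psi>: "\<psi> \<in> E" "x = \<psi> w" unfolding orbit_E_def by blast
      have "\<psi> \<circ> \<zeta> \<in> E" using ss_facts(5)[OF ss \<psi>(1) \<zeta>(1)] .
      thus "x \<in> W" unfolding W_def using \<psi>(2) \<zeta>(2) by (intro orbit_memI[of "\<psi> \<circ> \<zeta>"]) auto
    next
      fix x assume "x \<in> W"
      then obtain \<psi> where \<psi>: "\<psi> \<in> E" "x = \<psi> v" unfolding W_def orbit_E_def by blast
      have "\<psi> \<circ> \<chi> \<in> E" using ss_facts(5)[OF ss \<psi>(1) \<chi>E] .
      thus "x \<in> orbit_E E w" using \<psi>(2) \<chi>v by (intro orbit_memI[of "\<psi> \<circ> \<chi>"]) auto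
    qed
  qed
  have "zariski_open_in W U" unfolding zariski_open_in_def U_def using Zcc by blast
  thus ?thesis using vU main unfolding W_def by blast
qed

theorem lemma3p2p1:
  fixes E :: "(('n::finite \<Rightarrow> 'k::field_char_0) \<Rightarrow> ('n \<Rightarrow> 'k)) set"
  assumes "alg_closed TYPE('k)"
    and "semigroup_subspace E"
  shows "(\<forall>v. is_M E v (orbit_E E v) \<and> vfields_at E v = orbit_E E v)
    \<and> (\<forall>Y. zariski_closed Y \<longrightarrow> (D_invariant E Y \<longleftrightarrow> E_stable E Y))
    \<and> (\<forall>v. \<exists>U. zariski_open_in (orbit_E E v) U \<and> v \<in> U \<and> (\<forall>w\<in>U. orbit_E E w = orbit_E E v))"
proof (intro conjI allI impI)
  note ss = assms(2)
  fix v
  have st: "E_stable E (orbit_E E v)" unfolding E_stable_def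
  proof (intro ballI subsetI)
    fix \<phi> y assume \<phi>: "\<phi> \<in> E" and "y \<in> \<phi> ` orbit_E E v"
    then obtain x where x: "x \<in> orbit_E E v" "y = \<phi> x" by blast
    then obtain \<psi> where \<psi>: "\<psi> \<in> E" "x = \<psi> v" unfolding orbit_E_def by blast
    show "y \<in> orbit_E E v" using ss_facts(5)[OF ss \<phi> \<psi>(1)] x(2) \<psi>(2)
      by (intro orbit_memI[of "\<phi> \<circ> \<psi>"]) auto
  qed
  have Dv: "D_invariant E (orbit_E E v)" using stable_imp_Dinv[OF ss orbit_closed[OF ss] st] .
  have vv: "v \<in> orbit_E E v" using ss_facts(6)[OF ss] by (intro orbit_memI[of id]) auto
  have minl: "\<forall>Z. D_invariant E Z \<and> v \<in> Z \<longrightarrow> orbit_E E v \<subseteq> Z"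
  proof (intro allI impI subsetI)
    fix Z x assume Z: "D_invariant E Z \<and> v \<in> Z" and "x \<in> orbit_E E v"
    then obtain \<psi> where \<psi>: "\<psi> \<in> E" "x = \<psi> v" unfolding orbit_E_def by blast
    have "E_stable E Z" using Dinv_imp_stable[OF ss] Z by blast
    hence "\<psi> ` Z \<subseteq> Z" using \<psi>(1) unfolding E_stable_def by (rule bspec)
    thus "x \<in> Z" using Z \<psi>(2) by blast
  qed
  show "is_M E v (orbit_E E v)" unfolding is_M_def using Dv vv minl by blast
  show "vfields_at E v = orbit_E E v"
    unfolding vfields_at_def vfields_def orbit_E_def by auto
next
  fix Y :: "('n \<Rightarrow> 'k) set" assume Y: "zariski_closed Y"
  show "D_invariant E Y \<longleftrightarrow> E_stable E Y"
    using Dinv_imp_stable[OF assms(2)] stable_imp_Dinv[OF assms(2) Y] by blast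
next
  fix v :: "'n \<Rightarrow> 'k"
  show "\<exists>U. zariski_open_in (orbit_E E v) U \<and> v \<in> U \<and> (\<forall>w\<in>U. orbit_E E w = orbit_E E v)"
    using open_part[OF assms(2)] .
qed

end
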